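(* Let $d=3$, $\omega=e^{2\pi i/3}$. Consider phases $\phi_{j,y}\in\mathbb{R}$ ($j,y\in\{0,1,2\}$), considered modulo $2\pi$, with $\phi_{0,y}+\phi_{1,y}+\phi_{2,y}\equiv0 \pmod{2\pi}$ for each $y$, and regard two such families as equivalent if they differ by adding a common multiple of $2\pi/3$ to all of $\phi_{0,1},\phi_{1,1},\phi_{2,1}$ and/or a common multiple of $2\pi/3$ to all of $\phi_{0,2},\phi_{1,2},\phi_{2,2}$ (equivalently, replacing $\overline{B}_1$ by $\omega^a\overline{B}_1$ and $\overline{B}_2$ by $\omega^b\overline{B}_2$). Then the system $\sum_{l=0}^{2}\exp\!\big(i\sum_{m=1}^{n}(\phi_{l\oplus m,y'}-\phi_{l\oplus m,y})\big)=3\delta_{yy'}$ for all $y,y'\in\{0,1,2\}$ and $n\in\{1,2\}$ holds if and only if, up to this equivalence and with $\phi_{0,0},\phi_{1,0}$ arbitrary and $\phi_{2,y}\equiv-\phi_{0,y}-\phi_{1,y}$, one of the following holds: (a) $\phi_{0,1}=\phi_{0,0}-2\pi/3$, $\phi_{1,1}=\phi_{1,0}$, $\phi_{0,2}=\phi_{0,0}-2\pi/3$, $\phi_{1,2}=\phi_{1,0}+2\pi/3$; (b) $\phi_{0,1}=\phi_{0,0}-2\pi/3$, $\phi_{1,1}=\phi_{1,0}+2\pi/3$, $\phi_{0,2}=\phi_{0,0}-2\pi/3$, $\phi_{1,2}=\phi_{1,0}$. In case (a) the corresponding observables are $\overline{B}_0=e^{i\phi_{0,0}}|0\rangle\langle2|+e^{i\phi_{1,0}}|1\rangle\langle0|+e^{-i(\phi_{0,0}+\phi_{1,0})}|2\rangle\langle1|$,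 $\overline{B}_1=\omega^2e^{i\phi_{0,0}}|0\rangle\langle2|+e^{i\phi_{1,0}}|1\rangle\langle0|+\omega e^{-i(\phi_{0,0}+\phi_{1,0})}|2\rangle\langle1|$, $\overline{B}_2=\omega^2e^{i\phi_{0,0}}|0\rangle\langle2|+\omega e^{i\phi_{1,0}}|1\rangle\langle0|+e^{-i(\phi_{0,0}+\phi_{1,0})}|2\rangle\langle1|$.
   Context: $\oplus$ denotes addition modulo 3. For $d=3$ the reference observables are $\overline{B}_y=\sum_{l=0}^{2}e^{i\phi_{l\oplus1,y}}|l+1\rangle\langle l|$ on $\mathbb{C}^3$ (labels mod 3). The displayed system is the orthogonality condition $\sum_{k}(\gamma^{(n)}_{y'k})^*\gamma^{(n)}_{yk}=\delta_{yy'}$ written in terms of the phases. *)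

theory Defs
  imports Complex_Main
begin

definition cong2pi :: "real \<Rightarrow> real \<Rightarrow> bool" where
  "cong2pi x y \<longleftrightarrow> (\<exists>k::int. x - y = 2 * pi * of_int k)"

definition orth_system :: "(nat \<Rightarrow> nat \<Rightarrow> real) \<Rightarrow> bool" where
  "orth_system phi \<longleftrightarrow>
     (\<forall>y<3. \<forall>y'<3. \<forall>n\<in>{1,2::nat}.
        (\<Sum>l<3. exp (\<i> * complex_of_real
           (\<Sum>m=1..n. phi ((l + m) mod 3) y' - phi ((l + m) mod 3) y)))
        = (if y = y' then 3 else 0))"

definition shift_phases :: "int \<Rightarrow> int \<Rightarrow> (nat \<Rightarrow> nat \<Rightarrow> real) \<Rightarrow> (nat \<Rightarrow> nat \<Rightarrow> real)" where
  "shift_phases a b phi = (\<lambda>j y. phi j y + 2 * pi / 3 *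
      (if y = 1 then of_int a else if y = 2 then of_int b else 0))"

definition case_a :: "(nat \<Rightarrow> nat \<Rightarrow> real) \<Rightarrow> bool" where
  "case_a psi \<longleftrightarrow>
     cong2pi (psi 0 1) (psi 0 0 - 2 * pi / 3) \<and> cong2pi (psi 1 1) (psi 1 0) \<and>
     cong2pi (psi 0 2) (psi 0 0 - 2 * pi / 3) \<and> cong2pi (psi 1 2) (psi 1 0 + 2 * pi / 3)"

definition case_b :: "(nat \<Rightarrow> nat \<Rightarrow> real) \<Rightarrow> bool" where
  "case_b psi \<longleftrightarrow>
     cong2pi (psi 0 1) (psi 0 0 - 2 * pi / 3) \<and> cong2pi (psi 1 1) (psi 1 0 + 2 * pi / 3) \<and>
     cong2pi (psi 0 2) (psi 0 0 - 2 * pi / 3) \<and> cong2pi (psi 1 2) (psi 1 0)"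

end

theory Submission imports Defs "HOL-Analysis.Complex_Transcendental" begin

definition E :: "real \<Rightarrow> complex" where "E x = exp (\<i> * complex_of_real x)"

lemma E_add: "E (x + y) = E x * E y"
  by (simp add: E_def distrib_left exp_add)
lemma E_diff: "E (x - y) = E x / E y"
  by (simp add: E_def right_diff_distrib exp_diff)
lemma E_nz: "E x \<noteq> 0" by (simp add: E_def)
lemma E_norm: "norm (E x) = 1" by (simp add: E_def)
lemma E_0: "E 0 = 1" by (simp add: E_def)

lemma cong2pi_iff: "cong2pi x y \<longleftrightarrow> E (x - y) = 1"
proof -
  have "E (x - y) = 1 \<longleftrightarrow> (\<exists>n::int. x - y = of_int (2*n) * pi)"
    unfolding E_def exp_eq_1 by simp
  also have "\<dots> \<longleftrightarrow> cong2pi x y" unfolding cong2pi_def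
    by (simp add: mult.commute mult.left_commute)
  finally show ?thesis by simp
qed

definition \<omega> :: complex where "\<omega> = E (2*pi/3)"

lemma E_nat: "E (2*pi/3 * real n) = \<omega> ^ n"
  unfolding \<omega>_def E_def
  by (metis exp_of_nat_mult mult.commute mult.left_commute of_real_mult of_real_of_nat_eq)

lemma E_int: "E (2*pi/3 * of_int a) ^ 3 = 1"
proof -
  define t where "t = 2*pi/3 * of_int a"
  have "E t ^ 3 = E (t + t + t)" by (simp only: E_add power3_eq_cube)
  also have "t + t + t = 2 * pi * of_int a" unfolding t_def by simp
  also have "E (2 * pi * of_int a) = 1" using cong2pi_iff[of "2 * pi * of_int a" 0] unfolding cong2pi_def by auto
  finally show ?thesis unfolding t_def .
qed

lemma w3: "\<omega> ^ 3 = 1"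
  using E_int[of 1] unfolding \<omega>_def by simp

lemma w_ne1: "\<omega> \<noteq> 1"
proof
  assume "\<omega> = 1"
  then have "cong2pi (2*pi/3) 0" unfolding cong2pi_iff \<omega>_def by simp
  then obtain k::int where "2*pi/3 = 2*pi*k" unfolding cong2pi_def by auto
  then have "1 = 3 * real_of_int k" by (simp add: field_simps)
  then have "1 = 3 * k" by linarith
  then show False by presburger
qed

lemma w_sum: "\<omega>^2 + \<omega> + 1 = 0"
proof -
  have "(\<omega> - 1) * (\<omega>^2 + \<omega> + 1) = 0" using w3 by (simp add: algebra_simps power3_eq_cube power2_eq_square)
  then show ?thesis using w_ne1 by simp
qed

lemma w_norm: "norm \<omega> = 1" unfolding \<omega>_def by (rule E_norm)


lemma w_nz: "\<omega> \<noteq> 0" using w_norm by auto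

lemma cube_root: assumes "(z::complex)^3 = 1" shows "\<exists>k<3. z = \<omega>^k"
proof -
  have "(z - 1) * (z - \<omega>) * (z - \<omega>^2) = z^3 - 1" using w_sum w3 by algebra
  then have "z = 1 \<or> z = \<omega> \<or> z = \<omega>^2" using assms by simp
  then show ?thesis
  proof (elim disjE)
    assume "z = 1" then show ?thesis by (intro exI[of _ 0]) simp
  next
    assume "z = \<omega>" then show ?thesis by (intro exI[of _ 1]) simp
  next
    assume "z = \<omega>^2" then show ?thesis by (intro exI[of _ 2]) simp
  qed
qed

lemma w_mod: "\<omega> ^ n = \<omega> ^ (n mod 3)"
proof -
  have "\<omega>^n = \<omega>^(3*(n div 3) + n mod 3)" by simp
  also have "\<dots> = \<omega>^(n mod 3)" by (simp only: power_add power_mult w3 power_one mult_1)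
  finally show ?thesis .
qed

lemma w2: "\<omega>^2 \<noteq> 1"
proof
  assume h: "\<omega>^2 = 1"
  have "\<omega>^3 = \<omega> * \<omega>^2" by (simp add: power3_eq_cube power2_eq_square)
  then show False using h w3 w_ne1 by simp
qed

lemma w2': "\<omega>^2 \<noteq> \<omega>"
proof
  assume h: "\<omega>^2 = \<omega>"
  then have "\<omega> * (\<omega> - 1) = 0" by (simp add: algebra_simps power2_eq_square)
  then show False using w_nz w_ne1 by simp
qed

lemma w_inj: assumes "i < 3" "j < 3" "\<omega>^i = \<omega>^j" shows "i = j"
proof -
  have "i = 0 \<or> i = 1 \<or> i = 2" "j = 0 \<or> j = 1 \<or> j = 2" using assms by auto
  then show ?thesis using assms(3) w_ne1 w2 w2' by (auto dest: sym)
qed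

lemma tri_distinct:
  assumes "\<omega>^i + \<omega>^j + \<omega>^k = 0" shows "i \<noteq> j \<and> j \<noteq> k \<and> i \<noteq> k"
proof -
  have n: "norm (\<omega>^n) = 1" for n by (simp add: norm_power w_norm)
  have key: False if "2 * \<omega>^p + \<omega>^q = 0" for p q
  proof -
    have "\<omega>^q = - (2 * \<omega>^p)" using that by (rule add_eq_0_iff[THEN iffD1])
    then have h1: "norm (\<omega>^q) = norm (2 * \<omega>^p)" by (simp only: norm_minus_cancel)
    have "norm (2 * \<omega>^p) = norm (2::complex) * norm (\<omega>^p)" by (rule norm_mult)
    also have "\<dots> = 2" unfolding n[of p] by simp
    finally have b: "norm (2 * \<omega>^p) = 2" .
    from h1 have "(1::real) = 2" unfolding b n[of q] .
    then show False by simp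
  qed
  have "i \<noteq> j"
  proof
    assume "i = j"
    then have "2 * \<omega>^i + \<omega>^k = \<omega>^i + \<omega>^j + \<omega>^k" by (simp only: mult_2)
    also have "\<dots> = 0" by (rule assms)
    finally have "2 * \<omega>^i + \<omega>^k = 0" .
    then show False by (rule key)
  qed
  moreover have "j \<noteq> k"
  proof
    assume "j = k"
    then have "2 * \<omega>^j + \<omega>^i = \<omega>^i + \<omega>^j + \<omega>^k" by (simp only: mult_2 add_ac)
    also have "\<dots> = 0" by (rule assms)
    finally have "2 * \<omega>^j + \<omega>^i = 0" .
    then show False by (rule key)
  qed
  moreover have "i \<noteq> k"
  proof
    assume "i = k"
    then have "2 * \<omega>^i + \<omega>^j = \<omega>^i + \<omega>^j + \<omega>^k" by (simp only: mult_2 add_ac)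
    also have "\<dots> = 0" by (rule assms)
    finally have "2 * \<omega>^i + \<omega>^j = 0" .
    then show False by (rule key)
  qed
  ultimately show ?thesis by blast
qed

lemma sym_cube:
  fixes u0 u1 u2 :: complex
  assumes "u0 + u1 + u2 = 0" "u0*u1 + u1*u2 + u2*u0 = 0" "u0*u1*u2 = 1"
  shows "u0^3 = 1"
proof -
  have "u0^3 - 1 = u0^3 - (u0+u1+u2)*u0^2 + (u0*u1 + u1*u2 + u2*u0)*u0 - u0*u1*u2"
    using assms by simp
  also have "\<dots> = 0" by (simp add: algebra_simps power2_eq_square power3_eq_cube)
  finally show ?thesis by simp
qed


lemma three: "(x::nat) < 3 \<Longrightarrow> x = 0 \<or> x = 1 \<or> x = 2" by auto

lemma comb:
  fixes k0 k1 m0 m1 q0 q1 :: nat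
  assumes "k0 < 3" "k1 < 3" "m0 < 3" "m1 < 3" "q0 < 3" "q1 < 3"
    "k0 \<noteq> k1" "m0 \<noteq> m1" "q0 \<noteq> q1" "(q0 + k0) mod 3 = m0" "(q1 + k1) mod 3 = m1"
  shows "\<exists>a b::nat. ((k0+a+1) mod 3 = 0 \<and> (k1+a) mod 3 = 0 \<and> (m0+b+1) mod 3 = 0 \<and> (m1+b+2) mod 3 = 0)
     \<or> ((k0+a+1) mod 3 = 0 \<and> (k1+a+2) mod 3 = 0 \<and> (m0+b+1) mod 3 = 0 \<and> (m1+b) mod 3 = 0)"
proof -
  from three[OF assms(1)] three[OF assms(2)] three[OF assms(3)] three[OF assms(4)]
    three[OF assms(5)] three[OF assms(6)]
  have "((k0+(2-k0)+1) mod 3 = 0 \<and> (k1+(2-k0)) mod 3 = 0 \<and> (m0+(2-m0)+1) mod 3 = 0 \<and> (m1+(2-m0)+2) mod 3 = 0)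
     \<or> ((k0+(2-k0)+1) mod 3 = 0 \<and> (k1+(2-k0)+2) mod 3 = 0 \<and> (m0+(2-m0)+1) mod 3 = 0 \<and> (m1+(2-m0)) mod 3 = 0)"
    using assms(7-11) by (elim disjE) simp_all
  then show ?thesis by (rule exI[of _ "2 - k0", OF exI[of _ "2 - m0"]])
qed

definition U :: "(nat \<Rightarrow> nat \<Rightarrow> real) \<Rightarrow> nat \<Rightarrow> nat \<Rightarrow> nat \<Rightarrow> complex" where
  "U phi y y' j = E (phi j y' - phi j y)"

lemma E4: "E (x + y - (u + v)) = E (x - u) * E (y - v)"
  unfolding E_add[symmetric] by (rule arg_cong[where f=E]) simp

lemma orth_iff: "orth_system phi \<longleftrightarrow> (\<forall>y<3. \<forall>y'<3. y \<noteq> y' \<longrightarrow>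
   (U phi y y' 0 + U phi y y' 1 + U phi y y' 2 = 0 \<and>
    U phi y y' 0 * U phi y y' 1 + U phi y y' 1 * U phi y y' 2 + U phi y y' 2 * U phi y y' 0 = 0))"
proof -
  have s3: "(\<Sum>l<3. f l) = f 0 + f 1 + f 2" for f :: "nat \<Rightarrow> complex"
  proof - have "{..<3::nat} = {0,1,2}" by auto then show ?thesis by (simp add: add.assoc) qed
  have r2: "(\<Sum>m=1..2. g m) = g 1 + g 2" for g :: "nat\<Rightarrow>real"
  proof - have "{1..2::nat} = {1,2}" by auto then show ?thesis by simp qed
  have k1: "(\<Sum>l<3. exp (\<i> * complex_of_real (\<Sum>m=1..1. phi ((l + m) mod 3) y' - phi ((l + m) mod 3) y)))
     = U phi y y' 0 + U phi y y' 1 + U phi y y' 2" for y y'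
    unfolding E_def[symmetric] by (simp add: s3 U_def numeral_2_eq_2)
  have k2: "(\<Sum>l<3. exp (\<i> * complex_of_real (\<Sum>m=1..2. phi ((l + m) mod 3) y' - phi ((l + m) mod 3) y)))
     = U phi y y' 0 * U phi y y' 1 + U phi y y' 1 * U phi y y' 2 + U phi y y' 2 * U phi y y' 0" for y y'
    unfolding E_def[symmetric] by (simp add: s3 r2 U_def E4 algebra_simps numeral_2_eq_2)
  have d: "U phi y y j = 1" for y j by (simp add: U_def E_0)
  have B: "\<And>P. (\<forall>n\<in>{1,2::nat}. P n) = (P 1 \<and> P 2)" by auto
  show ?thesis unfolding orth_system_def B k1 k2
    by (auto simp: d)
qed


lemma U_nz: "U phi y y' j \<noteq> 0" by (simp add: U_def E_nz)

lemma U_rel: "U phi 1 2 j * U phi 0 1 j = U phi 0 2 j"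
  unfolding U_def E_add[symmetric] by (rule arg_cong[where f=E]) simp

lemma U_rev: "U phi y' y j = 1 / U phi y y' j"
  unfolding U_def E_diff by (simp add: E_nz)

lemma prod_U:
  assumes "\<forall>y<3. cong2pi (phi 0 y + phi 1 y + phi 2 y) 0" "y < 3" "y' < 3"
  shows "U phi y y' 0 * U phi y y' 1 * U phi y y' 2 = 1"
proof -
  have h: "E (phi 0 t) * E (phi 1 t) * E (phi 2 t) = 1" if "t < 3" for t
    using assms(1) that unfolding cong2pi_iff by (simp add: E_add)
  show ?thesis using h[OF assms(2)] h[OF assms(3)] unfolding U_def E_diff
    by (simp add: field_simps E_nz)
qed

lemma recip:
  fixes u0 u1 u2 :: complex
  assumes "u0 + u1 + u2 = 0" "u0*u1 + u1*u2 + u2*u0 = 0" "u0 \<noteq> 0" "u1 \<noteq> 0" "u2 \<noteq> 0"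
  shows "1/u0 + 1/u1 + 1/u2 = 0 \<and> (1/u0)*(1/u1) + (1/u1)*(1/u2) + (1/u2)*(1/u0) = 0"
proof
  have "1/u0 + 1/u1 + 1/u2 = (u0*u1 + u1*u2 + u2*u0) / (u0*u1*u2)" using assms by (simp add: field_simps)
  then show "1/u0 + 1/u1 + 1/u2 = 0" using assms by simp
  have "(1/u0)*(1/u1) + (1/u1)*(1/u2) + (1/u2)*(1/u0) = (u0 + u1 + u2) / (u0*u1*u2)" using assms by (simp add: field_simps)
  then show "(1/u0)*(1/u1) + (1/u1)*(1/u2) + (1/u2)*(1/u0) = 0" using assms by simp
qed

definition S12 :: "(nat \<Rightarrow> nat \<Rightarrow> real) \<Rightarrow> nat \<Rightarrow> nat \<Rightarrow> bool" where
  "S12 phi y y' \<longleftrightarrow> (U phi y y' 0 + U phi y y' 1 + U phi y y' 2 = 0 \<and>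
    U phi y y' 0 * U phi y y' 1 + U phi y y' 1 * U phi y y' 2 + U phi y y' 2 * U phi y y' 0 = 0)"

lemma S12_rev: "S12 phi y y' \<Longrightarrow> S12 phi y' y"
  unfolding S12_def U_rev[of phi y' y] using recip U_nz by blast

lemma orth_iff2: "orth_system phi \<longleftrightarrow> S12 phi 0 1 \<and> S12 phi 0 2 \<and> S12 phi 1 2"
proof -
  have "orth_system phi \<longleftrightarrow> (\<forall>y<3. \<forall>y'<3. y \<noteq> y' \<longrightarrow> S12 phi y y')"
    unfolding orth_iff S12_def ..
  also have "\<dots> \<longleftrightarrow> S12 phi 0 1 \<and> S12 phi 0 2 \<and> S12 phi 1 2"
  proof
    assume "\<forall>y<3. \<forall>y'<3. y \<noteq> y' \<longrightarrow> S12 phi y y'" then show "S12 phi 0 1 \<and> S12 phi 0 2 \<and> S12 phi 1 2" by simp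
  next
    assume h: "S12 phi 0 1 \<and> S12 phi 0 2 \<and> S12 phi 1 2"
    show "\<forall>y<3. \<forall>y'<3. y \<noteq> y' \<longrightarrow> S12 phi y y'"
    proof (intro allI impI)
      fix y y' :: nat assume "y < 3" "y' < 3" "y \<noteq> y'"
      then have "y = 0 \<or> y = 1 \<or> y = 2" "y' = 0 \<or> y' = 1 \<or> y' = 2" by auto
      then show "S12 phi y y'" using h S12_rev \<open>y \<noteq> y'\<close> by auto
    qed
  qed
  finally show ?thesis .
qed

lemma E2pi: "E (2*pi) = 1" using cong2pi_iff[of "2*pi" 0] unfolding cong2pi_def by auto

lemma Lc1: "cong2pi (x + s) (y - 2*pi/3) \<longleftrightarrow> E (x - y) * E s * \<omega> = 1"
proof -
  have "x + s - (y - 2*pi/3) = (x - y) + s + 2*pi/3" by simp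
  then have "E (x + s - (y - 2*pi/3)) = E (x - y) * E s * \<omega>"
    by (simp only: E_add \<omega>_def)
  then show ?thesis unfolding cong2pi_iff by simp
qed

lemma Lc2: "cong2pi (x + s) y \<longleftrightarrow> E (x - y) * E s = 1"
proof -
  have "x + s - y = (x - y) + s" by simp
  then have "E (x + s - y) = E (x - y) * E s" by (simp only: E_add)
  then show ?thesis unfolding cong2pi_iff by simp
qed

lemma Lc3: "cong2pi (x + s) (y + 2*pi/3) \<longleftrightarrow> E (x - y) * E s * \<omega>^2 = 1"
proof -
  have "x + s - (y + 2*pi/3) = (x - y) + s + 2*pi/3 * real 2 - 2*pi" by simp
  then have "E (x + s - (y + 2*pi/3)) = E (x - y) * E s * \<omega>^2"
    by (simp only: E_diff E_add E_nat E2pi div_by_1)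
  then show ?thesis unfolding cong2pi_iff by simp
qed

lemma sh0: "shift_phases a b phi j 0 = phi j 0" by (simp add: shift_phases_def)
lemma sh1: "shift_phases a b phi j 1 = phi j 1 + 2*pi/3 * of_int a" by (simp add: shift_phases_def)
lemma sh2: "shift_phases a b phi j 2 = phi j 2 + 2*pi/3 * of_int b" by (simp add: shift_phases_def)

lemma caseA_iff: "case_a (shift_phases a b phi) \<longleftrightarrow>
   U phi 0 1 0 * E (2*pi/3 * of_int a) * \<omega> = 1 \<and> U phi 0 1 1 * E (2*pi/3 * of_int a) = 1 \<and>
   U phi 0 2 0 * E (2*pi/3 * of_int b) * \<omega> = 1 \<and> U phi 0 2 1 * E (2*pi/3 * of_int b) * \<omega>^2 = 1"
  unfolding case_a_def sh0 sh1 sh2 Lc1 Lc3 unfolding Lc2 U_def ..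

lemma caseB_iff: "case_b (shift_phases a b phi) \<longleftrightarrow>
   U phi 0 1 0 * E (2*pi/3 * of_int a) * \<omega> = 1 \<and> U phi 0 1 1 * E (2*pi/3 * of_int a) * \<omega>^2 = 1 \<and>
   U phi 0 2 0 * E (2*pi/3 * of_int b) * \<omega> = 1 \<and> U phi 0 2 1 * E (2*pi/3 * of_int b) = 1"
  unfolding case_b_def sh0 sh1 sh2 Lc1 Lc3 unfolding Lc2 U_def ..


lemma pair_exps:
  assumes A: "\<forall>y<3. cong2pi (phi 0 y + phi 1 y + phi 2 y) 0"
    and S: "S12 phi y y'" and y: "y < 3" "y' < 3"
  shows "\<exists>k0 k1 k2. k0 < 3 \<and> k1 < 3 \<and> k2 < 3 \<and> U phi y y' 0 = \<omega>^k0 \<and>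
     U phi y y' 1 = \<omega>^k1 \<and> U phi y y' 2 = \<omega>^k2 \<and> k0 \<noteq> k1"
proof -
  define u0 where "u0 = U phi y y' 0"
  define u1 where "u1 = U phi y y' 1"
  define u2 where "u2 = U phi y y' 2"
  have p: "u0*u1*u2 = 1" unfolding u0_def u1_def u2_def by (rule prod_U[OF A y])
  have s1: "u0+u1+u2 = 0" and s2: "u0*u1+u1*u2+u2*u0 = 0"
    using S unfolding S12_def u0_def u1_def u2_def by auto
  have c0: "u0^3 = 1" using sym_cube[OF s1 s2 p] .
  have c1: "u1^3 = 1" by (rule sym_cube[of u1 u2 u0]) (use s1 s2 p in algebra)+
  have c2: "u2^3 = 1" by (rule sym_cube[of u2 u0 u1]) (use s1 s2 p in algebra)+
  obtain k0 where k0: "k0 < 3" "u0 = \<omega>^k0" using cube_root[OF c0] by blast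
  obtain k1 where k1: "k1 < 3" "u1 = \<omega>^k1" using cube_root[OF c1] by blast
  obtain k2 where k2: "k2 < 3" "u2 = \<omega>^k2" using cube_root[OF c2] by blast
  have "k0 \<noteq> k1" using tri_distinct[of k0 k1 k2] s1 k0 k1 k2 by simp
  then show ?thesis using k0 k1 k2 unfolding u0_def u1_def u2_def by blast
qed

lemma w_one: "n mod 3 = 0 \<Longrightarrow> \<omega>^n = 1"
  using w_mod[of n] by simp

lemma Enat_int: "E (2*pi/3 * of_int (int a)) = \<omega>^a"
  using E_nat[of a] by simp

lemma algA:
  fixes z0 z1 z2 w0 w1 w2 p0 p1 p2 c d w :: complex
  assumes zp: "z0*z1*z2 = 1" and wp: "w0*w1*w2 = 1" and pz: "p0*z0 = w0" "p1*z1 = w1" "p2*z2 = w2"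
    and e: "z0*c*w = 1" "z1*c = 1" "w0*d*w = 1" "w1*d*w^2 = 1"
    and c3: "c^3 = 1" and d3: "d^3 = 1" and ws: "w^2+w+1 = 0" and o3: "w^3 = 1"
  shows "(z0+z1+z2 = 0 \<and> z0*z1+z1*z2+z2*z0 = 0) \<and> (w0+w1+w2 = 0 \<and> w0*w1+w1*w2+w2*w0 = 0)
       \<and> (p0+p1+p2 = 0 \<and> p0*p1+p1*p2+p2*p0 = 0)"
proof -
    have vz0: "z0 = c^2*w^2" using e(1) c3 o3 by algebra
    have vz1: "z1 = c^2" using e(2) c3 by algebra
    have vz2: "z2 = c^2*w" using zp vz0 vz1 c3 o3 by algebra
    have vw0: "w0 = d^2*w^2" using e(3) d3 o3 by algebra
    have vw1: "w1 = d^2*w" using e(4) d3 o3 by algebra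
    have vw2: "w2 = d^2" using wp vw0 vw1 d3 o3 by algebra
    have vp0: "p0 = c*d^2" using pz(1) vz0 vw0 c3 o3 by algebra
    have vp1: "p1 = c*d^2*w" using pz(2) vz1 vw1 c3 o3 by algebra
    have vp2: "p2 = c*d^2*w^2" using pz(3) vz2 vw2 c3 o3 by algebra
    show ?thesis unfolding vz0 vz1 vz2 vw0 vw1 vw2 vp0 vp1 vp2
      by (intro conjI; use ws o3 in algebra)
qed

lemma algB:
  fixes z0 z1 z2 w0 w1 w2 p0 p1 p2 c d w :: complex
  assumes zp: "z0*z1*z2 = 1" and wp: "w0*w1*w2 = 1" and pz: "p0*z0 = w0" "p1*z1 = w1" "p2*z2 = w2"
    and e: "z0*c*w = 1" "z1*c*w^2 = 1" "w0*d*w = 1" "w1*d = 1"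
    and c3: "c^3 = 1" and d3: "d^3 = 1" and ws: "w^2+w+1 = 0" and o3: "w^3 = 1"
  shows "(z0+z1+z2 = 0 \<and> z0*z1+z1*z2+z2*z0 = 0) \<and> (w0+w1+w2 = 0 \<and> w0*w1+w1*w2+w2*w0 = 0)
       \<and> (p0+p1+p2 = 0 \<and> p0*p1+p1*p2+p2*p0 = 0)"
proof -
    have vz0: "z0 = c^2*w^2" using e(1) c3 o3 by algebra
    have vz1: "z1 = c^2*w" using e(2) c3 o3 by algebra
    have vz2: "z2 = c^2" using zp vz0 vz1 c3 o3 by algebra
    have vw0: "w0 = d^2*w^2" using e(3) d3 o3 by algebra
    have vw1: "w1 = d^2" using e(4) d3 by algebra
    have vw2: "w2 = d^2*w" using wp vw0 vw1 d3 o3 by algebra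
    have vp0: "p0 = c*d^2" using pz(1) vz0 vw0 c3 o3 by algebra
    have vp1: "p1 = c*d^2*w^2" using pz(2) vz1 vw1 c3 o3 by algebra
    have vp2: "p2 = c*d^2*w" using pz(3) vz2 vw2 c3 o3 by algebra
    show ?thesis unfolding vz0 vz1 vz2 vw0 vw1 vw2 vp0 vp1 vp2
      by (intro conjI; use ws o3 in algebra)
qed

theorem mainTheorem10:
  fixes phi :: "nat \<Rightarrow> nat \<Rightarrow> real"
  assumes "\<forall>y<3. cong2pi (phi 0 y + phi 1 y + phi 2 y) 0"
  shows "orth_system phi \<longleftrightarrow>
    (\<exists>a b :: int. case_a (shift_phases a b phi) \<or> case_b (shift_phases a b phi))"
proof
  assume orth: "orth_system phi"
  have S: "S12 phi 0 1" "S12 phi 0 2" "S12 phi 1 2" using orth orth_iff2 by auto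
  obtain k0 k1 k2 where k: "k0 < 3" "k1 < 3" "k2 < 3" "U phi 0 1 0 = \<omega>^k0"
     "U phi 0 1 1 = \<omega>^k1" "U phi 0 1 2 = \<omega>^k2" "k0 \<noteq> k1"
    using pair_exps[OF assms S(1)] by auto
  obtain m0 m1 m2 where m: "m0 < 3" "m1 < 3" "m2 < 3" "U phi 0 2 0 = \<omega>^m0"
     "U phi 0 2 1 = \<omega>^m1" "U phi 0 2 2 = \<omega>^m2" "m0 \<noteq> m1"
    using pair_exps[OF assms S(2)] by auto
  obtain q0 q1 q2 where q: "q0 < 3" "q1 < 3" "q2 < 3" "U phi 1 2 0 = \<omega>^q0"
     "U phi 1 2 1 = \<omega>^q1" "U phi 1 2 2 = \<omega>^q2" "q0 \<noteq> q1"
    using pair_exps[OF assms S(3)] by auto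
  have rel: "(q + k) mod 3 = m" if "U phi 1 2 j = \<omega>^q" "U phi 0 1 j = \<omega>^k" "U phi 0 2 j = \<omega>^m" "m < 3" for j q k m
  proof -
    have "\<omega>^q * \<omega>^k = \<omega>^m" using U_rel[of phi j] that by simp
    then have "\<omega>^((q+k) mod 3) = \<omega>^m" by (simp add: power_add[symmetric] w_mod[of "q+k"])
    then show ?thesis using w_inj that(4) by simp
  qed
  have r0: "(q0 + k0) mod 3 = m0" using rel[of 0] q k m by simp
  have r1: "(q1 + k1) mod 3 = m1" using rel[of 1] q k m by simp
  obtain a b :: nat where ab: "((k0+a+1) mod 3 = 0 \<and> (k1+a) mod 3 = 0 \<and> (m0+b+1) mod 3 = 0 \<and> (m1+b+2) mod 3 = 0)
     \<or> ((k0+a+1) mod 3 = 0 \<and> (k1+a+2) mod 3 = 0 \<and> (m0+b+1) mod 3 = 0 \<and> (m1+b) mod 3 = 0)"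
    using comb[OF k(1,2) m(1,2) q(1,2) k(7) m(7) q(7) r0 r1] by (elim exE) (rule that)
  have pw: "\<omega>^x * \<omega>^y * \<omega> = \<omega>^(x+y+1)" "\<omega>^x * \<omega>^y = \<omega>^(x+y)" "\<omega>^x * \<omega>^y * \<omega>^2 = \<omega>^(x+y+2)" for x y
    by (simp_all add: power_add power2_eq_square)
  from ab show "\<exists>a b :: int. case_a (shift_phases a b phi) \<or> case_b (shift_phases a b phi)"
  proof
    assume h: "(k0+a+1) mod 3 = 0 \<and> (k1+a) mod 3 = 0 \<and> (m0+b+1) mod 3 = 0 \<and> (m1+b+2) mod 3 = 0"
    have f: "\<omega>^(k0+a+1) = 1" "\<omega>^(k1+a) = 1" "\<omega>^(m0+b+1) = 1" "\<omega>^(m1+b+2) = 1"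
      by (intro w_one; use h in simp)+
    have "case_a (shift_phases (int a) (int b) phi)"
      unfolding caseA_iff Enat_int k(4,5) m(4,5) pw(1) pw(3) unfolding pw(2) by (intro conjI f)
    then show ?thesis by blast
  next
    assume h: "(k0+a+1) mod 3 = 0 \<and> (k1+a+2) mod 3 = 0 \<and> (m0+b+1) mod 3 = 0 \<and> (m1+b) mod 3 = 0"
    have f: "\<omega>^(k0+a+1) = 1" "\<omega>^(k1+a+2) = 1" "\<omega>^(m0+b+1) = 1" "\<omega>^(m1+b) = 1"
      by (intro w_one; use h in simp)+
    have "case_b (shift_phases (int a) (int b) phi)"
      unfolding caseB_iff Enat_int k(4,5) m(4,5) pw(1) pw(3) unfolding pw(2) by (intro conjI f)
    then show ?thesis by blast
  qed
next
  assume "\<exists>a b :: int. case_a (shift_phases a b phi) \<or> case_b (shift_phases a b phi)"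
  then obtain a b :: int where ab: "case_a (shift_phases a b phi) \<or> case_b (shift_phases a b phi)" by (elim exE) (rule that)
  have c3: "E (2*pi/3 * of_int a)^3 = 1" and d3: "E (2*pi/3 * of_int b)^3 = 1" by (rule E_int)+
  have zp: "U phi 0 1 0 * U phi 0 1 1 * U phi 0 1 2 = 1" by (rule prod_U[OF assms]) auto
  have wp: "U phi 0 2 0 * U phi 0 2 1 * U phi 0 2 2 = 1" by (rule prod_U[OF assms]) auto
  have pz: "U phi 1 2 0 * U phi 0 1 0 = U phi 0 2 0" "U phi 1 2 1 * U phi 0 1 1 = U phi 0 2 1"
     "U phi 1 2 2 * U phi 0 1 2 = U phi 0 2 2" by (rule U_rel)+
  have "S12 phi 0 1 \<and> S12 phi 0 2 \<and> S12 phi 1 2"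
    using ab
  proof
    assume "case_a (shift_phases a b phi)"
    then have eall: "U phi 0 1 0 * E (2*pi/3 * of_int a) * \<omega> = 1 \<and> U phi 0 1 1 * E (2*pi/3 * of_int a) = 1 \<and> U phi 0 2 0 * E (2*pi/3 * of_int b) * \<omega> = 1 \<and> U phi 0 2 1 * E (2*pi/3 * of_int b) * \<omega>^2 = 1" unfolding caseA_iff .
    note e = eall[THEN conjunct1] eall[THEN conjunct2, THEN conjunct1]
      eall[THEN conjunct2, THEN conjunct2, THEN conjunct1] eall[THEN conjunct2, THEN conjunct2, THEN conjunct2]
    show ?thesis unfolding S12_def by (rule algA[OF zp wp pz e c3 d3 w_sum w3])
  next
    assume "case_b (shift_phases a b phi)"
    then have eall: "U phi 0 1 0 * E (2*pi/3 * of_int a) * \<omega> = 1 \<and> U phi 0 1 1 * E (2*pi/3 * of_int a) * \<omega>^2 = 1 \<and> U phi 0 2 0 * E (2*pi/3 * of_int b) * \<omega> = 1 \<and> U phi 0 2 1 * E (2*pi/3 * of_int b) = 1" unfolding caseB_iff .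
    note e = eall[THEN conjunct1] eall[THEN conjunct2, THEN conjunct1]
      eall[THEN conjunct2, THEN conjunct2, THEN conjunct1] eall[THEN conjunct2, THEN conjunct2, THEN conjunct2]
    show ?thesis unfolding S12_def by (rule algB[OF zp wp pz e c3 d3 w_sum w3])
  qed
  then show "orth_system phi" using orth_iff2 by blast
qed

end
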